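(* Let $m\ge3$, $C$ a set of $m$ candidates, $T$ the set of all $m!$ strict rankings of $C$, and $w=(w_1,\dots,w_m)$ with $1=w_1\ge\cdots\ge w_m=0$; for $t\in T$, $\alpha\in C$ let $\sigma_t(\alpha)=w_i$ where $i$ is the position of $\alpha$ in $t$. Suppose $n$ voters each independently choose a ranking uniformly from $T$, let $N_t$ be the number choosing $t$, and $|\alpha|=\sum_t N_t\sigma_t(\alpha)$. Let $$K=\begin{cases}2\,m!\,(1-w_{m-1})^{-1}, & w_{m-1}<1,\\ 0, & w_{m-1}=1.\end{cases}$$ Then with probability 1 the following holds: if some candidate $a$ satisfies $|a|>|\alpha|$ for all $\alpha\ne a$, then for every $\beta\neq a$, $$Q_1(\beta)\le Q_2(\beta)+K,$$ where $Q_1(\beta)$ and $Q_2(\beta)$ are defined as follows. Let $\bar T_{\beta a}$ be the set of types ranking $\beta$ above $a$, and $T_\beta$ the set of types ranking $\beta$ first. $Q_1(\beta)$ is the optimal value (or $+\infty$ if infeasible) of the integer linear program: minimize $\sum_{t\in\bar T_{\beta a}}x_t$ subject to $$\sum_{t\in T_\beta}y_t(1-\sigma_t(\alpha))-\sum_{t\in\bar T_{\beta a}}x_t(\sigma_t(\beta)-\sigma_t(\alpha))\ge |\alpha|-|\beta|\quad\forall\alpha\ne\beta,$$ $\sum_{t\in T_\beta}y_t=\sum_{t\in\bar T_{\beta a}}x_t$, $0\le x_t\le N_t$ for $t\in\bar T_{\beta a}$, $y_t\ge0$ for $t\in T_\beta$, and all $x_t,y_t$ integers. $Q_2(\beta)$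 is the optimal value (or $+\infty$ if infeasible) of the same program with the integrality constraints removed and the constraint $0\le x_t\le N_t$ replaced by $0\le x_t\le N_t-K$.
   Context: Voters' rankings ("types") are drawn under the Impartial Culture model: each of the $n$ voters independently picks one of the $m!$ rankings with equal probability. *)

theory Defs
  imports "HOL-Probability.Probability" "HOL-Combinatorics.Multiset_Permutations"
begin

text \<open>A type (strict ranking) is a list listing all candidates of C exactly once,
  most preferred first.  The position of a candidate is its (0-based) list index.\<close>

definition rankings :: "'a set \<Rightarrow> 'a list set" where
  "rankings C = permutations_of_set C"

definition pos :: "'a list \<Rightarrow> 'a \<Rightarrow> nat" where
  "pos t \<alpha> = (LEAST i. t ! i = \<alpha>)"

definition sigma :: "(nat \<Rightarrow> real) \<Rightarrow> 'a list \<Rightarrow> 'a \<Rightarrow> real" where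
  "sigma w t \<alpha> = w (pos t \<alpha> + 1)"

definition type_count :: "nat \<Rightarrow> (nat \<Rightarrow> 'a list) \<Rightarrow> 'a list \<Rightarrow> nat" where
  "type_count n prof t = card {i \<in> {..<n}. prof i = t}"

definition score :: "'a set \<Rightarrow> (nat \<Rightarrow> real) \<Rightarrow> ('a list \<Rightarrow> nat) \<Rightarrow> 'a \<Rightarrow> real" where
  "score C w N \<alpha> = (\<Sum>t\<in>rankings C. real (N t) * sigma w t \<alpha>)"

definition Kconst :: "nat \<Rightarrow> (nat \<Rightarrow> real) \<Rightarrow> real" where
  "Kconst m w = (if w (m - 1) < 1 then 2 * fact m / (1 - w (m - 1)) else 0)"

definition above :: "'a set \<Rightarrow> 'a \<Rightarrow> 'a \<Rightarrow> 'a list set" where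
  "above C \<beta> a = {t \<in> rankings C. pos t \<beta> < pos t a}"

definition first :: "'a set \<Rightarrow> 'a \<Rightarrow> 'a list set" where
  "first C \<beta> = {t \<in> rankings C. pos t \<beta> = 0}"

definition lp_feasible ::
  "'a set \<Rightarrow> (nat \<Rightarrow> real) \<Rightarrow> ('a list \<Rightarrow> nat) \<Rightarrow> 'a \<Rightarrow> 'a \<Rightarrow> real \<Rightarrow> bool
    \<Rightarrow> ('a list \<Rightarrow> real) \<Rightarrow> ('a list \<Rightarrow> real) \<Rightarrow> bool" where
  "lp_feasible C w N a \<beta> bnd intg x y \<longleftrightarrow>
     (\<forall>\<alpha>\<in>C - {\<beta>}.
        (\<Sum>t\<in>first C \<beta>. y t * (1 - sigma w t \<alpha>))
        - (\<Sum>t\<in>above C \<beta> a. x t * (sigma w t \<beta> - sigma w t \<alpha>))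
        \<ge> score C w N \<alpha> - score C w N \<beta>) \<and>
     (\<Sum>t\<in>first C \<beta>. y t) = (\<Sum>t\<in>above C \<beta> a. x t) \<and>
     (\<forall>t\<in>above C \<beta> a. 0 \<le> x t \<and> x t \<le> real (N t) - bnd) \<and>
     (\<forall>t\<in>first C \<beta>. 0 \<le> y t) \<and>
     (intg \<longrightarrow> (\<forall>t\<in>above C \<beta> a. x t \<in> \<int>) \<and> (\<forall>t\<in>first C \<beta>. y t \<in> \<int>))"

text \<open>Optimal value of the minimisation program (+infinity if infeasible).\<close>
definition lp_value ::
  "'a set \<Rightarrow> (nat \<Rightarrow> real) \<Rightarrow> ('a list \<Rightarrow> nat) \<Rightarrow> 'a \<Rightarrow> 'a \<Rightarrow> real \<Rightarrow> bool \<Rightarrow> ereal" where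
  "lp_value C w N a \<beta> bnd intg =
     Inf {ereal (\<Sum>t\<in>above C \<beta> a. x t) | x y. lp_feasible C w N a \<beta> bnd intg x y}"

definition Q1 :: "'a set \<Rightarrow> (nat \<Rightarrow> real) \<Rightarrow> ('a list \<Rightarrow> nat) \<Rightarrow> 'a \<Rightarrow> 'a \<Rightarrow> ereal" where
  "Q1 C w N a \<beta> = lp_value C w N a \<beta> 0 True"

definition Q2 :: "'a set \<Rightarrow> (nat \<Rightarrow> real) \<Rightarrow> ('a list \<Rightarrow> nat) \<Rightarrow> real \<Rightarrow> 'a \<Rightarrow> 'a \<Rightarrow> ereal" where
  "Q2 C w N K a \<beta> = lp_value C w N a \<beta> K False"

definition IC_profile :: "'a set \<Rightarrow> nat \<Rightarrow> (nat \<Rightarrow> 'a list) pmf" where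
  "IC_profile C n = Pi_pmf {..<n} [] (\<lambda>_. pmf_of_set (rankings C))"

end

theory Submission
  imports Defs
begin

lemma pos_nth: "distinct t \<Longrightarrow> i < length t \<Longrightarrow> pos t (t!i) = i"
  unfolding pos_def
proof (rule Least_equality)
  fix y assume a: "distinct t" "i < length t" "t ! y = t ! i"
  show "i \<le> y"
  proof (cases "y < length t")
    case True hence "y = i" using a nth_eq_iff_index_eq[of t y i] by blast
    thus ?thesis by simp
  qed (use a in auto)
qed auto

lemma pos_in: assumes "x \<in> set t" shows "pos t x < length t" "t ! pos t x = x"
proof -
  obtain i where i: "i < length t" "t!i = x" using assms by (auto simp: in_set_conv_nth)
  have "t ! pos t x = x" unfolding pos_def using i by (metis (mono_tags, lifting) LeastI)
  moreover have "pos t x \<le> i" unfolding pos_def using i by (metis (mono_tags, lifting) Least_le)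
  ultimately show "pos t x < length t" "t ! pos t x = x" using i by auto
qed

lemma rk: "t \<in> rankings C \<longleftrightarrow> set t = C \<and> distinct t"
  by (simp add: rankings_def permutations_of_set_def)

definition swp :: "'a \<Rightarrow> 'a \<Rightarrow> 'a \<Rightarrow> 'a" where
  "swp b h z = (if z = b then h else if z = h then b else z)"

lemma swp_inv[simp]: "swp b h (swp b h z) = z"
  by (auto simp: swp_def)

lemma swp_inj: "inj (swp b h)"
  by (metis injI swp_inv)

lemma swp_img: "b \<in> C \<Longrightarrow> h \<in> C \<Longrightarrow> swp b h ` C = C"
  by (auto simp: swp_def image_iff)

lemma sum_if_add: assumes "finite S" "t0 \<in> S"
  shows "(\<Sum>t\<in>S. (g t + (if t = t0 then k else 0)) * f t) = (\<Sum>t\<in>S. g t * f t) + k * (f t0::real)"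
proof -
  have "(\<Sum>t\<in>S. (g t + (if t = t0 then k else 0)) * f t) = (\<Sum>t\<in>S. g t * f t + (if t = t0 then k * f t else 0))"
    by (rule sum.cong) (auto simp: distrib_right)
  also have "\<dots> = (\<Sum>t\<in>S. g t * f t) + k * f t0" using assms by (simp add: sum.distrib)
  finally show ?thesis .
qed

lemma sum_if_add1: assumes "finite S" "t0 \<in> S"
  shows "(\<Sum>t\<in>S. (g t + (if t = t0 then k else 0))) = (\<Sum>t\<in>S. g t) + (k::real)"
  using sum_if_add[OF assms, of g k "\<lambda>_. 1"] by simp

lemma distrib_nat: assumes "finite S" "k \<le> (\<Sum>i\<in>S. c i)"
  shows "\<exists>v. (\<forall>i\<in>S. v i \<le> (c i::nat)) \<and> (\<Sum>i\<in>S. v i) = k"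
  using assms
proof (induction S arbitrary: k rule: finite_induct)
  case empty thus ?case by auto
next
  case (insert i S)
  define j where "j = min k (\<Sum>i\<in>S. c i)"
  obtain v where v: "\<forall>i\<in>S. v i \<le> c i" "(\<Sum>i\<in>S. v i) = j" using insert.IH[of j] by (auto simp: j_def)
  define v' where "v' = v(i := k - j)"
  have "(\<Sum>i\<in>S. v' i) = j" using v insert.hyps by (auto simp: v'_def intro!: sum.cong)
  moreover have "k - j \<le> c i" using insert.prems insert.hyps by (auto simp: j_def)
  ultimately show ?case using v insert.hyps by (auto simp: v'_def j_def intro!: exI[of _ v'])
qed

context
  fixes C :: "'a set" and m :: nat and w :: "nat \<Rightarrow> real"
  assumes fin: "finite C" and cardC: "card C = m" and m3: "m \<ge> 3"
    and w1: "w 1 = 1" and wm: "w m = 0"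
    and wmono: "\<And>i j. 1 \<le> i \<Longrightarrow> i \<le> j \<Longrightarrow> j \<le> m \<Longrightarrow> w j \<le> w i"
begin

lemma len: "t \<in> rankings C \<Longrightarrow> length t = m"
  using cardC by (auto simp: rk distinct_card[symmetric])

lemma w_bounds: "1 \<le> i \<Longrightarrow> i \<le> m \<Longrightarrow> 0 \<le> w i \<and> w i \<le> 1"
  using wmono[of 1 i] wmono[of i m] w1 wm by auto

lemma pos_lt: "t \<in> rankings C \<Longrightarrow> g \<in> C \<Longrightarrow> pos t g < m"
  using pos_in(1)[of g t] len by (auto simp: rk)

lemma sig_bounds: "t \<in> rankings C \<Longrightarrow> g \<in> C \<Longrightarrow> 0 \<le> sigma w t g \<and> sigma w t g \<le> 1"
  unfolding sigma_def using pos_lt[of t g] w_bounds[of "pos t g + 1"] by auto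

lemma card_rk: "card (rankings C) = fact m"
  using fin cardC by (simp add: rankings_def)


lemma hd_in: "s \<in> rankings C \<Longrightarrow> hd s \<in> C \<and> s ! 0 = hd s"
  using len[of s] m3 by (cases s) (auto simp: rk)

lemma prom_rank: assumes "s \<in> rankings C" "b \<in> C"
  shows "map (swp b (hd s)) s \<in> rankings C"
proof -
  have "set (map (swp b (hd s)) s) = C" using assms hd_in[OF assms(1)] swp_img[where b=b and h="hd s" and C=C]
    by (simp add: rk)
  moreover have "distinct (map (swp b (hd s)) s)" using assms(1) swp_inj
    by (simp add: rk distinct_map inj_on_subset[OF swp_inj])
  ultimately show ?thesis by (simp add: rk)
qed

lemma prom_pos: assumes "s \<in> rankings C" "b \<in> C" "g \<in> C"
  shows "pos (map (swp b (hd s)) s) g = pos s (swp b (hd s) g)"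
proof -
  let ?f = "swp b (hd s)"
  have fg: "?f g \<in> set s" using assms hd_in[OF assms(1)] swp_img[where b=b and h="hd s"] by (auto simp: rk)
  let ?i = "pos s (?f g)"
  have i: "?i < length s" "s ! ?i = ?f g" using pos_in[OF fg] by auto
  have "map ?f s ! ?i = g" using i by simp
  moreover have "distinct (map ?f s)" using prom_rank[OF assms(1,2)] by (simp add: rk)
  ultimately show ?thesis using pos_nth[of "map ?f s" ?i] i by auto
qed

lemma prom_first: assumes "s \<in> rankings C" "b \<in> C"
  shows "map (swp b (hd s)) s \<in> first C b"
proof -
  have "pos s (hd s) = 0" using pos_nth[of s 0] hd_in[OF assms(1)] len[OF assms(1)] m3 assms(1)
    by (auto simp: rk)
  thus ?thesis using prom_rank[OF assms] prom_pos[OF assms assms(2)] by (simp add: first_def swp_def)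
qed

lemma prom_gain: assumes "s \<in> rankings C" "b \<in> C" "g \<in> C" "g \<noteq> b"
  shows "(1 - sigma w (map (swp b (hd s)) s) g) - (sigma w s b - sigma w s g) \<ge> 0"
proof -
  have p0: "pos s (hd s) = 0" using pos_nth[of s 0] hd_in[OF assms(1)] len[OF assms(1)] m3 assms(1)
    by (auto simp: rk)
  have e: "sigma w (map (swp b (hd s)) s) g = sigma w s (swp b (hd s) g)"
    using prom_pos[OF assms(1-3)] by (simp add: sigma_def)
  show ?thesis
  proof (cases "g = hd s")
    case True
    hence "sigma w s g = 1" using p0 w1 by (simp add: sigma_def)
    thus ?thesis using e True assms sig_bounds[of s b] by (simp add: swp_def)
  next
    case False
    thus ?thesis using e assms sig_bounds[of s b] by (simp add: swp_def)
  qed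
qed


lemma booster: assumes aC: "a \<in> C" and bC: "b \<in> C" and ab: "a \<noteq> b"
  obtains ts ss where "ts \<in> first C b" "ss \<in> above C b a"
    "\<And>g. g \<in> C - {b} \<Longrightarrow> (1 - sigma w ts g) - (sigma w ss b - sigma w ss g) \<ge> 1 - w (m - 1)"
proof -
  obtain p where p: "distinct p" "set p = C - {a, b}" using finite_distinct_list[of "C - {a,b}"] fin by auto
  have lp: "length p = m - 2" using distinct_card[OF p(1)] p(2) cardC aC bC ab fin
    by (simp add: card_Diff_subset)
  define ts where "ts = b # p @ [a]"
  define ss where "ss = p @ [b, a]"
  have tsr: "ts \<in> rankings C" using p aC bC ab by (auto simp: rk ts_def)
  have ssr: "ss \<in> rankings C" using p aC bC ab by (auto simp: rk ss_def)
  have dts: "distinct ts" and dss: "distinct ss" using tsr ssr by (auto simp: rk)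
  have lts: "length ts = m" and lss: "length ss = m" using tsr ssr len by auto
  have pb: "pos ts b = 0" using pos_nth[OF dts, of 0] lts m3 by (simp add: ts_def)
  have "ts ! Suc (length p) = a" by (simp add: ts_def nth_append)
  hence pa: "pos ts a = m - 1" using pos_nth[OF dts, of "Suc (length p)"] lts m3 lp
    by simp
  have sb: "pos ss b = m - 2" using pos_nth[OF dss, of "m - 2"] lss m3 lp
    by (simp add: ss_def nth_append)
  have "ss ! Suc (length p) = a" by (simp add: ss_def nth_append)
  hence sa: "pos ss a = m - 1" using pos_nth[OF dss, of "Suc (length p)"] lss m3 lp
    by simp
  show ?thesis
  proof (rule that)
    show "ts \<in> first C b" using tsr pb by (simp add: first_def)
    show "ss \<in> above C b a" using ssr sb sa m3 by (simp add: above_def)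
    fix g assume g: "g \<in> C - {b}"
    have "Suc (m - 2) = m - 1" using m3 by simp
    hence sgb: "sigma w ss b = w (m - 1)" using sb by (simp add: sigma_def)
    show "(1 - sigma w ts g) - (sigma w ss b - sigma w ss g) \<ge> 1 - w (m - 1)"
    proof (cases "g = a")
      case True
      thus ?thesis using pa sa sgb wm m3 by (simp add: sigma_def)
    next
      case False
      hence "g \<in> set p" using g p by auto
      then obtain k where k: "k < length p" "p ! k = g" by (auto simp: in_set_conv_nth)
      have "pos ts g = k + 1" using pos_nth[OF dts, of "k+1"] k lts lp m3
        by (simp add: ts_def nth_append)
      moreover have "pos ss g = k" using pos_nth[OF dss, of "k"] k lss lp m3
        by (simp add: ss_def nth_append)
      moreover have "w (k + 2) \<le> w (k + 1)" using wmono[of "k+1" "k+2"] k lp m3 by simp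
      ultimately show ?thesis using sgb by (simp add: sigma_def)
    qed
  qed
qed


lemma general:
  fixes N :: "'a list \<Rightarrow> nat" and x y :: "'a list \<Rightarrow> real"
  assumes aC: "a \<in> C" and bC: "b \<in> C" and ab: "a \<noteq> b" and wl: "w (m - 1) < 1"
    and feas: "lp_feasible C w N a b (Kconst m w) False x y"
  shows "\<exists>x' y'. lp_feasible C w N a b 0 True x' y' \<and>
           (\<Sum>t\<in>above C b a. x' t) \<le> (\<Sum>t\<in>above C b a. x t) + Kconst m w"
proof -
  define A where "A = above C b a"
  define F where "F = first C b"
  have finA: "finite A" and finF: "finite F"
    by (auto simp: A_def F_def above_def first_def rankings_def)
  have Ar: "A \<subseteq> rankings C" and Fr: "F \<subseteq> rankings C"
    by (auto simp: A_def F_def above_def first_def)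
  have w0: "0 \<le> w (m - 1)" using w_bounds[of "m - 1"] m3 by auto
  define c where "c = 1 / (1 - w (m - 1))"
  have c1: "c \<ge> 1" using wl w0 by (simp add: c_def)
  have cw: "c * (1 - w (m - 1)) = 1" using wl by (simp add: c_def)
  define K where "K = Kconst m w"
  have Kdef: "K = 2 * fact m * c" using wl by (simp add: K_def Kconst_def c_def)
  obtain ts ss where ts: "ts \<in> F" and ss: "ss \<in> A"
    and gst: "\<And>g. g \<in> C - {b} \<Longrightarrow> (1 - sigma w ts g) - (sigma w ss b - sigma w ss g) \<ge> 1 - w (m - 1)"
    using booster[OF aC bC ab] unfolding A_def F_def by metis
  define p where "p s = map (swp b (hd s)) s" for s
  have pF: "p s \<in> F" if "s \<in> A" for s
    using prom_first[of s b] that Ar bC by (auto simp: p_def F_def)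
  have pimg: "p ` A \<subseteq> F" using pF by auto
  define \<delta> where "\<delta> s = real_of_int (ceiling (x s)) - x s" for s
  have d0: "0 \<le> \<delta> s" "\<delta> s < 1" for s unfolding \<delta>_def by linarith+
  define y2 where "y2 t = y t + (\<Sum>s\<in>{s\<in>A. p s = t}. \<delta> s)" for t
  have grp: "(\<Sum>t\<in>F. (\<Sum>s\<in>{s\<in>A. p s = t}. \<delta> s) * f t) = (\<Sum>s\<in>A. \<delta> s * f (p s))" for f
  proof -
    have "(\<Sum>t\<in>F. (\<Sum>s\<in>{s\<in>A. p s = t}. \<delta> s) * f t) = (\<Sum>t\<in>F. (\<Sum>s\<in>{s\<in>A. p s = t}. \<delta> s * f (p s)))"
      by (auto simp: sum_distrib_right intro!: sum.cong)
    also have "\<dots> = (\<Sum>s\<in>A. \<delta> s * f (p s))"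
      by (rule sum.group[OF finA finF pimg])
    finally show ?thesis .
  qed
  have cons: "\<And>\<alpha>. \<alpha> \<in> C - {b} \<Longrightarrow> (\<Sum>t\<in>F. y t * (1 - sigma w t \<alpha>)) - (\<Sum>t\<in>A. x t * (sigma w t b - sigma w t \<alpha>))
        \<ge> score C w N \<alpha> - score C w N b"
    and eqs: "(\<Sum>t\<in>F. y t) = (\<Sum>t\<in>A. x t)"
    and xb: "\<And>t. t \<in> A \<Longrightarrow> 0 \<le> x t \<and> x t \<le> real (N t) - K"
    and y0: "\<And>t. t \<in> F \<Longrightarrow> 0 \<le> y t"
    using feas unfolding lp_feasible_def A_def F_def K_def by auto
  have K0: "K \<ge> 0" using Kdef c1 by simp
  have y20: "y2 t \<ge> 0" if "t \<in> F" for t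
    using y0[OF that] d0 by (auto simp: y2_def intro!: add_nonneg_nonneg sum_nonneg)
  have sumy2: "(\<Sum>t\<in>F. y2 t) = (\<Sum>t\<in>F. y t) + (\<Sum>s\<in>A. \<delta> s)"
    using grp[of "\<lambda>_. 1"] by (simp add: y2_def sum.distrib)
  have sumceil: "(\<Sum>s\<in>A. real_of_int (ceiling (x s))) = (\<Sum>s\<in>A. x s) + (\<Sum>s\<in>A. \<delta> s)"
    by (simp add: \<delta>_def sum.distrib[symmetric])
  define r where "r = (\<Sum>t\<in>F. y2 t - real_of_int (floor (y2 t)))"
  define ri where "ri = (\<Sum>s\<in>A. ceiling (x s)) - (\<Sum>t\<in>F. floor (y2 t))"
  have sumfl: "(\<Sum>t\<in>F. real_of_int (floor (y2 t))) = (\<Sum>t\<in>F. y2 t) - r"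
    by (simp add: r_def sum_subtractf)
  have r_eq: "r = real_of_int ri"
    using sumfl sumy2 sumceil eqs by (simp add: ri_def)
  have r0: "r \<ge> 0" unfolding r_def by (rule sum_nonneg) linarith
  have cardF: "card F \<le> fact m" using card_mono[OF _ Fr] card_rk by (simp add: rankings_def)
  have cardA: "card A \<le> fact m" using card_mono[OF _ Ar] card_rk by (simp add: rankings_def)
  have "r < (\<Sum>t\<in>F. 1)" unfolding r_def
    by (rule sum_strict_mono[OF finF]) (use ts in \<open>auto, linarith\<close>)
  moreover have "real (card F) \<le> fact m" using cardF by (metis of_nat_fact of_nat_le_iff)
  ultimately have "r < fact m" by simp
  hence "ri < int (fact m)" using r_eq by (metis of_int_less_iff of_int_of_nat_eq of_nat_fact)
  hence "ri \<le> int (fact m) - 1" by simp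
  hence "real_of_int ri \<le> real_of_int (int (fact m) - 1)" by (simp only: of_int_le_iff)
  hence rle: "r \<le> fact m - 1" using r_eq by simp
  define Bi where "Bi = ceiling (r * c)"
  define B where "B = real_of_int Bi"
  have B1: "B \<ge> r * c" "B < r * c + 1" unfolding B_def Bi_def by linarith+
  have B0: "B \<ge> 0" using B1 r0 c1 by (smt (verit) mult_nonneg_nonneg)
  have sd: "(\<Sum>s\<in>A. \<delta> s) \<le> fact m"
  proof -
    have "(\<Sum>s\<in>A. \<delta> s) \<le> (\<Sum>s\<in>A. 1)" by (rule sum_mono) (use d0 in \<open>simp add: less_imp_le\<close>)
    moreover have "real (card A) \<le> fact m" using cardA by (metis of_nat_fact of_nat_le_iff)
    ultimately show ?thesis by simp
  qed
  have fm1: "(fact m :: real) \<ge> 1" by simp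
  have "r * c \<le> (fact m - 1) * c" using rle c1 by (simp add: mult_right_mono)
  moreover have "(fact m + 1) * (c - 1) \<ge> (0::real)" using c1 fm1 by simp
  ultimately have key: "(\<Sum>s\<in>A. \<delta> s) + B \<le> K"
    using B1 sd Kdef c1 by (simp_all add: algebra_simps)
  have "c * fact m \<ge> 0" using c1 by simp
  moreover have "K = 2 * (c * fact m)" using Kdef by simp
  moreover have "r * c \<le> c * fact m - c" using \<open>r * c \<le> (fact m - 1) * c\<close> by (simp add: algebra_simps)
  ultimately have BK: "B \<le> K" using B1 c1 by linarith
  define x' where "x' s = real_of_int (ceiling (x s)) + (if s = ss then B else 0)" for s
  define y' where "y' t = real_of_int (floor (y2 t)) + (if t = ts then r + B else 0)" for t
  have sx': "(\<Sum>s\<in>A. x' s) = (\<Sum>s\<in>A. x s) + (\<Sum>s\<in>A. \<delta> s) + B"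
    unfolding x'_def using sum_if_add1[OF finA ss] sumceil by simp
  have sy': "(\<Sum>t\<in>F. y' t) = (\<Sum>t\<in>F. y2 t) + B"
    unfolding y'_def using sum_if_add1[OF finF ts] sumfl by simp
  have Bint: "B \<in> \<int>" by (simp add: B_def)
  have rint: "r \<in> \<int>" by (simp add: r_eq)
  have "lp_feasible C w N a b 0 True x' y'"
    unfolding lp_feasible_def A_def[symmetric] F_def[symmetric]
  proof (intro conjI ballI impI)
    fix \<alpha> assume \<alpha>: "\<alpha> \<in> C - {b}"
    define f where "f t = 1 - sigma w t \<alpha>" for t
    define h where "h t = sigma w t b - sigma w t \<alpha>" for t
    have fb: "0 \<le> f t \<and> f t \<le> 1" if "t \<in> rankings C" for t
      using sig_bounds[OF that, of \<alpha>] \<alpha> by (auto simp: f_def)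
    have e1: "(\<Sum>t\<in>F. y' t * f t) = (\<Sum>t\<in>F. real_of_int (floor (y2 t)) * f t) + (r + B) * f ts"
      unfolding y'_def by (rule sum_if_add[OF finF ts])
    have e2: "(\<Sum>t\<in>F. real_of_int (floor (y2 t)) * f t) = (\<Sum>t\<in>F. y2 t * f t) - (\<Sum>t\<in>F. (y2 t - floor (y2 t)) * f t)"
      by (simp add: sum_subtractf[symmetric] algebra_simps)
    have e3: "(\<Sum>t\<in>F. y2 t * f t) = (\<Sum>t\<in>F. y t * f t) + (\<Sum>s\<in>A. \<delta> s * f (p s))"
      unfolding y2_def by (simp add: distrib_right sum.distrib grp)
    have e4: "(\<Sum>s\<in>A. x' s * h s) = (\<Sum>s\<in>A. real_of_int (ceiling (x s)) * h s) + B * h ss"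
      unfolding x'_def by (rule sum_if_add[OF finA ss])
    have e5: "(\<Sum>s\<in>A. real_of_int (ceiling (x s)) * h s) = (\<Sum>s\<in>A. x s * h s) + (\<Sum>s\<in>A. \<delta> s * h s)"
      by (simp add: \<delta>_def sum.distrib[symmetric] algebra_simps)
    have i1: "(\<Sum>s\<in>A. \<delta> s * f (p s)) - (\<Sum>s\<in>A. \<delta> s * h s) \<ge> 0"
    proof -
      have "(\<Sum>s\<in>A. \<delta> s * f (p s)) - (\<Sum>s\<in>A. \<delta> s * h s) = (\<Sum>s\<in>A. \<delta> s * (f (p s) - h s))"
        by (simp add: sum_subtractf[symmetric] algebra_simps)
      also have "\<dots> \<ge> 0"
      proof (rule sum_nonneg)
        fix s assume s: "s \<in> A"
        have "f (p s) - h s \<ge> 0" using prom_gain[of s b \<alpha>] s Ar bC \<alpha>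
          by (auto simp: f_def h_def p_def)
        thus "\<delta> s * (f (p s) - h s) \<ge> 0" using d0 by simp
      qed
      finally show ?thesis .
    qed
    have i2: "(\<Sum>t\<in>F. (y2 t - floor (y2 t)) * f t) \<le> r"
      unfolding r_def
    proof (rule sum_mono)
      fix t assume "t \<in> F"
      hence "0 \<le> f t \<and> f t \<le> 1" using fb Fr by auto
      moreover have "y2 t - floor (y2 t) \<ge> 0" by linarith
      ultimately show "(y2 t - floor (y2 t)) * f t \<le> y2 t - floor (y2 t)"
        by (simp add: mult_left_le)
    qed
    have i3: "f ts \<ge> 0" using fb Fr ts by auto
    have i4: "B * (f ts - h ss) \<ge> r"
    proof -
      have "f ts - h ss \<ge> 1 - w (m - 1)" using gst[OF \<alpha>] by (simp add: f_def h_def)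
      hence "B * (f ts - h ss) \<ge> B * (1 - w (m - 1))" using B0 by (simp add: mult_left_mono)
      moreover have "B * (1 - w (m - 1)) \<ge> r * c * (1 - w (m - 1))" using B1 wl by (simp add: mult_right_mono)
      moreover have "r * c * (1 - w (m - 1)) = r" using cw by (simp add: mult.assoc)
      ultimately show ?thesis by linarith
    qed
    have i5: "r * f ts \<ge> 0" using r0 i3 by simp
    have c\<alpha>: "(\<Sum>t\<in>F. y t * f t) - (\<Sum>t\<in>A. x t * h t) \<ge> score C w N \<alpha> - score C w N b"
      using cons[OF \<alpha>] by (simp add: f_def h_def)
    have "(\<Sum>t\<in>F. y' t * f t) - (\<Sum>s\<in>A. x' s * h s) \<ge> score C w N \<alpha> - score C w N b"
      using e1 e2 e3 e4 e5 i1 i2 i4 i5 c\<alpha> by (simp add: algebra_simps)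
    thus "(\<Sum>t\<in>F. y' t * (1 - sigma w t \<alpha>)) - (\<Sum>t\<in>A. x' t * (sigma w t b - sigma w t \<alpha>))
        \<ge> score C w N \<alpha> - score C w N b" by (simp add: f_def h_def)
  next
    show "(\<Sum>t\<in>F. y' t) = (\<Sum>t\<in>A. x' t)" using sx' sy' sumy2 eqs by simp
  next
    fix t assume t: "t \<in> A"
    show "0 \<le> x' t" using xb[OF t] B0 by (simp add: x'_def)
    show "x' t \<le> real (N t) - 0"
    proof (cases "t = ss")
      case True
      have "real_of_int (ceiling (x t)) < x t + 1" by linarith
      hence "real_of_int (ceiling (x t)) + B < real (N t) + 1" using xb[OF t] BK by linarith
      hence "ceiling (x t) + Bi < int (N t) + 1" by (simp add: B_def)
      hence "ceiling (x t) + Bi \<le> int (N t)" by linarith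
      hence "real_of_int (ceiling (x t) + Bi) \<le> real_of_int (int (N t))" by (simp only: of_int_le_iff)
      thus ?thesis using True by (simp add: x'_def B_def)
    next
      case False
      have "x t \<le> real (N t)" using xb[OF t] K0 by linarith
      hence "ceiling (x t) \<le> int (N t)" by (simp add: ceiling_le_iff)
      hence "real_of_int (ceiling (x t)) \<le> real_of_int (int (N t))" by (simp only: of_int_le_iff)
      thus ?thesis using False by (simp add: x'_def)
    qed
  next
    fix t assume t: "t \<in> F"
    show "0 \<le> y' t" using y20[OF t] r0 B0 by (simp add: y'_def)
  next
    fix t assume "t \<in> A"
    show "x' t \<in> \<int>" using Bint by (simp add: x'_def)
  next
    fix t assume "t \<in> F"
    show "y' t \<in> \<int>" using Bint rint by (simp add: y'_def)
  qed
  moreover have "(\<Sum>t\<in>A. x' t) \<le> (\<Sum>t\<in>A. x t) + Kconst m w"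
    using sx' key by (simp add: K_def)
  ultimately show ?thesis unfolding A_def by blast
qed


lemma anti_sigma: assumes wl1: "w (m - 1) = 1" and t: "t \<in> rankings C" and g: "g \<in> C"
  shows "sigma w t g = (if g = t ! (m - 1) then 0 else 1)"
proof -
  have pl: "pos t g < m" using pos_lt[OF t g] .
  have dt: "distinct t" and lt: "length t = m" using t len by (auto simp: rk)
  have pm: "pos t (t ! (m - 1)) = m - 1" using pos_nth[OF dt, of "m - 1"] lt m3 by simp
  have tg: "t ! pos t g = g" using pos_in(2)[of g t] t g by (auto simp: rk)
  show ?thesis
  proof (cases "pos t g = m - 1")
    case True
    hence "g = t ! (m - 1)" using tg by simp
    moreover have "pos t g + 1 = m" using True m3 by simp
    ultimately show ?thesis using wm by (simp add: sigma_def)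
  next
    case False
    hence "g \<noteq> t ! (m - 1)" using pm by auto
    moreover have "w (pos t g + 1) = 1" using wmono[of 1 "pos t g + 1"] wmono[of "pos t g + 1" "m - 1"]
      False pl w1 wl1 by auto
    ultimately show ?thesis by (simp add: sigma_def)
  qed
qed

lemma lst_facts: assumes "t \<in> rankings C"
  shows "t ! (m - 1) \<in> C" "pos t (t ! (m - 1)) = m - 1"
  using assms len[OF assms] m3 pos_nth[of t "m - 1"] by (auto simp: rk)

lemma lst_not_b: assumes "t \<in> above C b a \<or> t \<in> first C b" "b \<in> C" "a \<in> C"
  shows "t ! (m - 1) \<noteq> b"
proof
  assume e: "t ! (m - 1) = b"
  have t: "t \<in> rankings C" using assms by (auto simp: above_def first_def)
  have "pos t b = m - 1" using lst_facts(2)[OF t] e by simp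
  moreover have "pos t a < m" using pos_lt[OF t assms(3)] .
  ultimately show False using assms(1) m3 by (auto simp: above_def first_def)
qed

lemma exists_tt: assumes "g \<in> C" "b \<in> C" "g \<noteq> b"
  shows "\<exists>t\<in>first C b. t ! (m - 1) = g"
proof -
  obtain p where p: "distinct p" "set p = C - {g, b}" using finite_distinct_list[of "C - {g,b}"] fin by auto
  have lp: "length p = m - 2" using distinct_card[OF p(1)] p(2) cardC assms fin
    by (simp add: card_Diff_subset)
  define t where "t = b # p @ [g]"
  have tr: "t \<in> rankings C" using p assms by (auto simp: rk t_def)
  have "pos t b = 0" using pos_nth[of t 0] tr len[OF tr] m3 by (simp add: rk t_def)
  moreover have "m - 1 = Suc (length p)" using lp m3 by simp
  hence "t ! (m - 1) = g" by (simp add: t_def nth_append)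
  ultimately show ?thesis using tr by (auto simp: first_def)
qed


lemma anti:
  fixes N :: "'a list \<Rightarrow> nat" and x y :: "'a list \<Rightarrow> real"
  assumes aC: "a \<in> C" and bC: "b \<in> C" and ab: "a \<noteq> b" and wl1: "w (m - 1) = 1"
    and feas: "lp_feasible C w N a b (Kconst m w) False x y"
  shows "\<exists>x' y'. lp_feasible C w N a b 0 True x' y' \<and>
           (\<Sum>t\<in>above C b a. x' t) \<le> (\<Sum>t\<in>above C b a. x t) + Kconst m w"
proof -
  define A where "A = above C b a"
  define F where "F = first C b"
  define A' where "A' = C - {b}"
  have finA: "finite A" and finF: "finite F" and finA': "finite A'"
    using fin by (auto simp: A_def F_def A'_def above_def first_def rankings_def)
  have Ar: "A \<subseteq> rankings C" and Fr: "F \<subseteq> rankings C"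
    by (auto simp: A_def F_def above_def first_def)
  have K0: "Kconst m w = 0" using wl1 by (simp add: Kconst_def)
  define lst where "lst t = t ! (m - 1)" for t :: "'a list"
  have lA: "lst t \<in> A'" if "t \<in> A" for t
    using lst_facts(1)[of t] lst_not_b[of t b a] that Ar aC bC by (auto simp: lst_def A'_def A_def)
  have lF: "lst t \<in> A'" if "t \<in> F" for t
    using lst_facts(1)[of t] lst_not_b[of t b a] that Fr aC bC by (auto simp: lst_def A'_def F_def)
  define Aa where "Aa g = {t \<in> A. lst t = g}" for g
  define Fa where "Fa g = {t \<in> F. lst t = g}" for g
  have grA: "(\<Sum>t\<in>A. z t) = (\<Sum>g\<in>A'. \<Sum>t\<in>Aa g. z t)" for z :: "'a list \<Rightarrow> real"
  proof -
    have "lst ` A \<subseteq> A'" using lA by auto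
    from sum.group[OF finA finA' this, of z] show ?thesis unfolding Aa_def by simp
  qed
  have grF: "(\<Sum>t\<in>F. z t) = (\<Sum>g\<in>A'. \<Sum>t\<in>Fa g. z t)" for z :: "'a list \<Rightarrow> real"
  proof -
    have "lst ` F \<subseteq> A'" using lF by auto
    from sum.group[OF finF finA' this, of z] show ?thesis unfolding Fa_def by simp
  qed
  have sF: "(\<Sum>t\<in>F. z t * (1 - sigma w t g)) = (\<Sum>t\<in>Fa g. z t)" if g: "g \<in> A'" for z g
  proof -
    have "(\<Sum>t\<in>F. z t * (1 - sigma w t g)) = (\<Sum>t\<in>F. if lst t = g then z t else 0)"
    proof (rule sum.cong)
      fix t assume "t \<in> F"
      thus "z t * (1 - sigma w t g) = (if lst t = g then z t else 0)"
        using anti_sigma[OF wl1, of t g] Fr g by (auto simp: lst_def A'_def)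
    qed simp
    thus ?thesis by (simp add: Fa_def sum.inter_filter[OF finF])
  qed
  have sA: "(\<Sum>t\<in>A. z t * (sigma w t b - sigma w t g)) = (\<Sum>t\<in>Aa g. z t)" if g: "g \<in> A'" for z g
  proof -
    have "(\<Sum>t\<in>A. z t * (sigma w t b - sigma w t g)) = (\<Sum>t\<in>A. if lst t = g then z t else 0)"
    proof (rule sum.cong)
      fix t assume t: "t \<in> A"
      have "lst t \<noteq> b" using lst_not_b[of t b a] t aC bC by (auto simp: lst_def A_def)
      thus "z t * (sigma w t b - sigma w t g) = (if lst t = g then z t else 0)"
        using anti_sigma[OF wl1, of t g] anti_sigma[OF wl1, of t b] Ar t g bC by (auto simp: lst_def A'_def)
    qed simp
    thus ?thesis by (simp add: Aa_def sum.inter_filter[OF finA])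
  qed
  have cons: "\<And>\<alpha>. \<alpha> \<in> C - {b} \<Longrightarrow> (\<Sum>t\<in>F. y t * (1 - sigma w t \<alpha>)) - (\<Sum>t\<in>A. x t * (sigma w t b - sigma w t \<alpha>))
        \<ge> score C w N \<alpha> - score C w N b"
    and eqs: "(\<Sum>t\<in>F. y t) = (\<Sum>t\<in>A. x t)"
    and xb: "\<And>t. t \<in> A \<Longrightarrow> 0 \<le> x t \<and> x t \<le> real (N t)"
    and y0: "\<And>t. t \<in> F \<Longrightarrow> 0 \<le> y t"
    using feas unfolding lp_feasible_def A_def F_def K0 by auto
  define d where "d g = score C w N g - score C w N b" for g
  have sint: "score C w N g \<in> \<int>" if "g \<in> C" for g
    unfolding score_def
    by (rule Ints_sum) (use anti_sigma[OF wl1 _ that] in auto)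
  have dint: "d g \<in> \<int>" if "g \<in> A'" for g using sint that bC by (auto simp: d_def A'_def)
  define Xf where "Xf g = (\<Sum>t\<in>Aa g. x t)" for g
  define Yf where "Yf g = (\<Sum>t\<in>Fa g. y t)" for g
  define M where "M g = (\<Sum>t\<in>Aa g. N t)" for g
  have cf: "Yf g - Xf g \<ge> d g" if "g \<in> A'" for g
    using cons[of g] that sF[OF that, of y] sA[OF that, of x] by (simp add: A'_def Xf_def Yf_def d_def)
  have Yf0: "Yf g \<ge> 0" for g
    unfolding Yf_def by (rule sum_nonneg) (use y0 in \<open>auto simp: Fa_def\<close>)
  have Xf0: "Xf g \<ge> 0" for g
    unfolding Xf_def by (rule sum_nonneg) (use xb in \<open>auto simp: Aa_def\<close>)
  have XfM: "Xf g \<le> real (M g)" for g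
    unfolding Xf_def M_def of_nat_sum by (rule sum_mono) (use xb in \<open>auto simp: Aa_def\<close>)
  have sXY: "(\<Sum>g\<in>A'. Yf g) = (\<Sum>g\<in>A'. Xf g)"
    using eqs grA[of x] grF[of y] by (simp add: Xf_def Yf_def)
  define Dr where "Dr = (\<Sum>g\<in>A'. if d g > 0 then d g else 0)"
  define U where "U = (\<Sum>g\<in>A'. if d g > 0 then 0 else min (Xf g) (- d g))"
  have "(\<Sum>g\<in>A'. Yf g) \<ge> (\<Sum>g\<in>A'. Xf g + (if d g > 0 then d g else 0) - (if d g > 0 then 0 else min (Xf g) (- d g)))"
  proof (rule sum_mono)
    fix g assume g: "g \<in> A'"
    show "Xf g + (if d g > 0 then d g else 0) - (if d g > 0 then 0 else min (Xf g) (- d g)) \<le> Yf g"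
      using cf[OF g] Yf0[of g] by (auto simp: min_def)
  qed
  hence DU: "Dr \<le> U" using sXY by (simp add: Dr_def U_def sum.distrib sum_subtractf)
  define cap where "cap g = (if d g > 0 then 0 else min (M g) (nat (floor (- d g))))" for g
  have Ucap: "U \<le> (\<Sum>g\<in>A'. real (cap g))"
    unfolding U_def
  proof (rule sum_mono)
    fix g assume g: "g \<in> A'"
    show "(if d g > 0 then 0 else min (Xf g) (- d g)) \<le> real (cap g)"
    proof (cases "d g > 0")
      case False
      have "- d g \<in> \<int>" using dint[OF g] by simp
      hence "real (nat (floor (- d g))) = - d g" using False
        by (metis Ints_cases floor_of_int of_int_of_nat_eq nat_0_le neg_0_le_iff_le not_less of_int_0_le_iff)
      thus ?thesis using False XfM[of g] by (auto simp: cap_def min_def)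
    qed (simp add: cap_def)
  qed
  have Drint: "Dr \<in> \<int>" unfolding Dr_def by (rule Ints_sum) (use dint in auto)
  have Dr0: "Dr \<ge> 0" unfolding Dr_def by (rule sum_nonneg) auto
  define Dn where "Dn = nat (floor Dr)"
  have Dn: "real Dn = Dr" using Drint Dr0 unfolding Dn_def
    by (metis Ints_cases floor_of_int of_int_of_nat_eq nat_0_le of_int_0_le_iff)
  have "real Dn \<le> real (\<Sum>g\<in>A'. cap g)" using Dn DU Ucap by simp
  hence "Dn \<le> (\<Sum>g\<in>A'. cap g)" by (simp only: of_nat_le_iff)
  then obtain v where v: "\<forall>g\<in>A'. v g \<le> cap g" "(\<Sum>g\<in>A'. v g) = Dn"
    using distrib_nat[OF finA'] by blast
  have "\<forall>g\<in>A'. \<exists>f. (\<forall>t\<in>Aa g. f t \<le> N t) \<and> (\<Sum>t\<in>Aa g. f t) = v g"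
  proof
    fix g assume g: "g \<in> A'"
    have "v g \<le> M g" using v(1) g by (auto simp: cap_def split: if_splits)
    moreover have "finite (Aa g)" using finA by (simp add: Aa_def)
    ultimately show "\<exists>f. (\<forall>t\<in>Aa g. f t \<le> N t) \<and> (\<Sum>t\<in>Aa g. f t) = v g"
      using distrib_nat[of "Aa g" "v g" N] by (simp add: M_def)
  qed
  then obtain G where G: "\<And>g. g \<in> A' \<Longrightarrow> (\<forall>t\<in>Aa g. G g t \<le> N t) \<and> (\<Sum>t\<in>Aa g. G g t) = v g"
    by metis
  have "\<forall>g\<in>A'. \<exists>t\<in>F. lst t = g"
    using exists_tt bC by (auto simp: A'_def F_def lst_def)
  then obtain tt where tt: "\<And>g. g \<in> A' \<Longrightarrow> tt g \<in> F \<and> lst (tt g) = g" by metis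
  define x' where "x' t = real (G (lst t) t)" for t
  define y' where "y' t = (if t = tt (lst t) \<and> d (lst t) > 0 then d (lst t) else 0)" for t
  have Xf': "(\<Sum>t\<in>Aa g. x' t) = real (v g)" if g: "g \<in> A'" for g
  proof -
    have "(\<Sum>t\<in>Aa g. x' t) = (\<Sum>t\<in>Aa g. real (G g t))"
      by (rule sum.cong) (auto simp: x'_def Aa_def)
    thus ?thesis using G[OF g] by (simp flip: of_nat_sum)
  qed
  have Yf': "(\<Sum>t\<in>Fa g. y' t) = (if d g > 0 then d g else 0)" if g: "g \<in> A'" for g
  proof -
    have "(\<Sum>t\<in>Fa g. y' t) = (\<Sum>t\<in>Fa g. if t = tt g then (if d g > 0 then d g else 0) else 0)"
      by (rule sum.cong) (auto simp: y'_def Fa_def)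
    also have "\<dots> = (if d g > 0 then d g else 0)"
      using tt[OF g] finF by (simp add: Fa_def)
    finally show ?thesis .
  qed
  have sx': "(\<Sum>t\<in>A. x' t) = Dr"
  proof -
    have "(\<Sum>t\<in>A. x' t) = (\<Sum>g\<in>A'. real (v g))" using grA[of x'] Xf' by simp
    also have "\<dots> = real Dn" using v(2) by (simp flip: of_nat_sum)
    finally show ?thesis using Dn by simp
  qed
  have sy': "(\<Sum>t\<in>F. y' t) = Dr"
    using grF[of y'] Yf' by (simp add: Dr_def)
  have "lp_feasible C w N a b 0 True x' y'"
    unfolding lp_feasible_def A_def[symmetric] F_def[symmetric] A'_def[symmetric]
  proof (intro conjI ballI impI)
    fix g assume g: "g \<in> A'"
    have "(\<Sum>t\<in>Fa g. y' t) - (\<Sum>t\<in>Aa g. x' t) \<ge> d g"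
    proof (cases "d g > 0")
      case True
      hence "v g = 0" using v(1) g by (auto simp: cap_def)
      thus ?thesis using Yf'[OF g] Xf'[OF g] True by simp
    next
      case False
      have "- d g \<in> \<int>" using dint[OF g] by simp
      hence "real (nat (floor (- d g))) = - d g" using False
        by (metis Ints_cases floor_of_int of_int_of_nat_eq nat_0_le neg_0_le_iff_le not_less of_int_0_le_iff)
      moreover have "v g \<le> nat (floor (- d g))" using v(1) g False by (auto simp: cap_def)
      ultimately have "real (v g) \<le> - d g" by (metis of_nat_le_iff)
      thus ?thesis using Yf'[OF g] Xf'[OF g] False by simp
    qed
    thus "(\<Sum>t\<in>F. y' t * (1 - sigma w t g)) - (\<Sum>t\<in>A. x' t * (sigma w t b - sigma w t g))
        \<ge> score C w N g - score C w N b"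
      using sF[OF g, of y'] sA[OF g, of x'] by (simp add: d_def)
  next
    show "(\<Sum>t\<in>F. y' t) = (\<Sum>t\<in>A. x' t)" using sx' sy' by simp
  next
    fix t assume t: "t \<in> A"
    show "0 \<le> x' t" by (simp add: x'_def)
    have "t \<in> Aa (lst t)" using t by (simp add: Aa_def)
    hence "G (lst t) t \<le> N t" using G[OF lA[OF t]] by blast
    thus "x' t \<le> real (N t) - 0" by (simp add: x'_def)
  next
    fix t assume t: "t \<in> F"
    show "0 \<le> y' t" by (simp add: y'_def)
  next
    fix t assume "t \<in> A"
    show "x' t \<in> \<int>" by (simp add: x'_def)
  next
    fix t assume t: "t \<in> F"
    show "y' t \<in> \<int>" using dint[OF lF[OF t]] by (simp add: y'_def)
  qed
  moreover have "(\<Sum>t\<in>A. x' t) \<le> (\<Sum>t\<in>A. x t) + Kconst m w"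
  proof -
    have "U \<le> (\<Sum>g\<in>A'. Xf g)" unfolding U_def
      by (rule sum_mono) (use Xf0 in auto)
    also have "\<dots> = (\<Sum>t\<in>A. x t)" using grA[of x] by (simp add: Xf_def)
    finally show ?thesis using sx' DU K0 by simp
  qed
  ultimately show ?thesis unfolding A_def by blast
qed


lemma combined:
  fixes N :: "'a list \<Rightarrow> nat"
  assumes aC: "a \<in> C" and bC: "b \<in> C" and ab: "a \<noteq> b"
  shows "Q1 C w N a b \<le> Q2 C w N (Kconst m w) a b + ereal (Kconst m w)"
proof -
  have key: "\<exists>x' y'. lp_feasible C w N a b 0 True x' y' \<and>
           (\<Sum>t\<in>above C b a. x' t) \<le> (\<Sum>t\<in>above C b a. x t) + Kconst m w"
    if f: "lp_feasible C w N a b (Kconst m w) False x y" for x y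
  proof (cases "w (m - 1) < 1")
    case True thus ?thesis using general[OF aC bC ab True f] by blast
  next
    case False
    hence "w (m - 1) = 1" using w_bounds[of "m - 1"] m3 by auto
    thus ?thesis using anti[OF aC bC ab _ f] by blast
  qed
  have "Q1 C w N a b - ereal (Kconst m w) \<le> Q2 C w N (Kconst m w) a b"
    unfolding Q2_def lp_value_def
  proof (rule Inf_greatest)
    fix z assume "z \<in> {ereal (\<Sum>t\<in>above C b a. x t) |x y. lp_feasible C w N a b (Kconst m w) False x y}"
    then obtain x y where z: "z = ereal (\<Sum>t\<in>above C b a. x t)"
      and f: "lp_feasible C w N a b (Kconst m w) False x y" by blast
    obtain x' y' where f': "lp_feasible C w N a b 0 True x' y'"
      and le: "(\<Sum>t\<in>above C b a. x' t) \<le> (\<Sum>t\<in>above C b a. x t) + Kconst m w"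
      using key[OF f] by blast
    have "Q1 C w N a b \<le> ereal (\<Sum>t\<in>above C b a. x' t)"
      unfolding Q1_def lp_value_def by (rule Inf_lower) (use f' in blast)
    also have "\<dots> \<le> z + ereal (Kconst m w)" using le z by simp
    finally show "Q1 C w N a b - ereal (Kconst m w) \<le> z" by (simp add: ereal_minus_le)
  qed
  thus ?thesis by (simp add: ereal_minus_le)
qed

end

theorem proposition5:
  fixes C :: "'a set" and m n :: nat and w :: "nat \<Rightarrow> real"
  assumes "finite C" and "card C = m" and "m \<ge> 3"
    and "w 1 = 1" and "w m = 0"
    and "\<And>i j. 1 \<le> i \<Longrightarrow> i \<le> j \<Longrightarrow> j \<le> m \<Longrightarrow> w j \<le> w i"
  shows "AE prof in measure_pmf (IC_profile C n).
           \<forall>a\<in>C. (\<forall>\<alpha>\<in>C - {a}. score C w (type_count n prof) \<alpha> < score C w (type_count n prof) a)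
             \<longrightarrow> (\<forall>\<beta>\<in>C - {a}.
                   Q1 C w (type_count n prof) a \<beta>
                     \<le> Q2 C w (type_count n prof) (Kconst m w) a \<beta> + ereal (Kconst m w))"
proof (rule AE_I2, intro ballI impI)
  fix prof a \<beta> assume "a \<in> C" "\<beta> \<in> C - {a}"
  thus "Q1 C w (type_count n prof) a \<beta>
          \<le> Q2 C w (type_count n prof) (Kconst m w) a \<beta> + ereal (Kconst m w)"
    using combined[OF assms, of a \<beta> "type_count n prof"] by auto
qed

end
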